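(* Let $n\ge3$. The cycle graph on $n$ nodes is reachable (observable) from every pair of distinct nodes if and only if $n$ is prime.
   Context: The cycle graph on nodes $\{1,\dots,n\}$ has edges $\{i,(i\bmod n)+1\}$; its Laplacian $L$ has $2$ on the diagonal and $-1$ in entries $(i,j)$ with $j\equiv i\pm1\pmod n$. Reachable from a pair $\{i_1,i_2\}$ means that $(L,B)$ with $B=[e_{i_1}|e_{i_2}]$ is reachable (reachability matrix has rank $n$); observable means $(L,B^T)$ is observable. *)

theory Defs
  imports "Jordan_Normal_Form.DL_Rank" "Jordan_Normal_Form.Matrix"
begin

definition mat_rank :: "'a::field mat \<Rightarrow> nat" where
  "mat_rank A = vec_space.rank (dim_row A) A"

text \<open>Laplacian of the cycle graph on nodes 1..n; node k corresponds to matrix index k-1.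
  Diagonal entries 2, entries (i,j) with j = i+1 or i = j+1 (mod n) equal -1.\<close>
definition cycle_laplacian :: "nat \<Rightarrow> real mat" where
  "cycle_laplacian n = mat n n (\<lambda>(i,j). if i = j then 2
      else if j = (i + 1) mod n \<or> i = (j + 1) mod n then -1 else 0)"

definition input_mat :: "nat \<Rightarrow> nat \<Rightarrow> nat \<Rightarrow> real mat" where
  "input_mat n i1 i2 = mat_of_cols n [unit_vec n (i1 - 1), unit_vec n (i2 - 1)]"

definition reach_mat :: "'a::field mat \<Rightarrow> 'a mat \<Rightarrow> 'a mat" where
  "reach_mat A B = mat_of_cols (dim_row A)
     (concat (map (\<lambda>k. cols ((A ^\<^sub>m k) * B)) [0..<dim_row A]))"

definition obs_mat :: "'a::field mat \<Rightarrow> 'a mat \<Rightarrow> 'a mat" where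
  "obs_mat A C = mat_of_rows (dim_row A)
     (concat (map (\<lambda>k. rows (C * (A ^\<^sub>m k))) [0..<dim_row A]))"

definition reachable :: "'a::field mat \<Rightarrow> 'a mat \<Rightarrow> bool" where
  "reachable A B \<longleftrightarrow> mat_rank (reach_mat A B) = dim_row A"

definition observable :: "'a::field mat \<Rightarrow> 'a mat \<Rightarrow> bool" where
  "observable A C \<longleftrightarrow> mat_rank (obs_mat A C) = dim_row A"

end

theory Submission
  imports Defs
begin


lemma (in vec_space) rank_full_span:
  assumes A: "A \<in> carrier_mat n nc" and r: "rank A = n"
  shows "span (set (cols A)) = carrier_vec n"
proof -
  have e: "lin_indpt {}"
    by (metis (no_types) empty_subsetI fin_dim finite_basis_exists subset_li_is_li vec_vs vectorspace.basis_def)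
  obtain S where S: "finite S" "maximal S (\<lambda>T. T \<subseteq> set (cols A) \<and> lin_indpt T)"
    using maximal_exists_superset[of "set (cols A)" "(\<lambda>T. T \<subseteq> set (cols A) \<and> lin_indpt T)" "{}"] e
    by auto
  have cs: "set (cols A) \<subseteq> carrier_vec n" using A cols_dim by blast
  have li: "lin_indpt S" and Ss: "S \<subseteq> set (cols A)" using S(2) unfolding maximal_def by auto
  have "card S = n" using rank_card_indpt[OF A S(2)] r by simp
  hence "basis S" using S(1) li Ss cs
    by (intro dim_li_is_basis) (auto simp: dim_is_n)
  hence "span S = carrier_vec n" unfolding basis_def by auto
  moreover have "span S \<subseteq> span (set (cols A))" using Ss cs by (intro span_is_monotone) 
  moreover have "span (set (cols A)) \<subseteq> carrier_vec n" using cs span_closed by blast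
  ultimately show ?thesis by blast
qed

lemma (in vec_space) span_full_rank:
  assumes A: "A \<in> carrier_mat n nc" and s: "span (set (cols A)) = carrier_vec n"
  shows "rank A = n"
proof -
  have "span_vs (set (cols A)) = V" using s by simp
  thus ?thesis unfolding rank_def using dim_is_n by simp
qed

lemma self_sprod_zero:
  fixes w :: "real vec"
  assumes "w \<in> carrier_vec n" "w \<bullet> w = 0"
  shows "w = 0\<^sub>v n"
proof -
  have "(\<Sum>i\<in>{0..<n}. w $ i * w $ i) = 0" using assms unfolding scalar_prod_def by simp
  hence "\<forall>i\<in>{0..<n}. w $ i * w $ i = 0" by (subst (asm) sum_nonneg_eq_0_iff) auto
  thus ?thesis using assms by (intro eq_vecI) auto
qed

lemma (in vec_space) mult_in_span:
  assumes A: "A \<in> carrier_mat n nc" and w: "w \<in> carrier_vec nc"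
  shows "A *\<^sub>v w \<in> span (set (cols A))"
proof -
  have cs: "set (cols A) \<subseteq> carrier_vec n" using A cols_dim by blast
  have "A = mat_of_cols n (cols A)" using A mat_of_cols_cols[of A] by simp
  moreover have "vec (length (cols A)) (\<lambda>i. w $ i) = w" using A w by (intro eq_vecI) auto
  moreover have "\<forall>w\<in>set (cols A). dim_vec w = n" using cs by auto
  ultimately have "A *\<^sub>v w = lincomb_list (\<lambda>i. w $ i) (cols A)"
    using lincomb_list_as_mat_mult[of "cols A" "\<lambda>i. w $ i"] by auto
  also have "\<dots> \<in> span_list (cols A)" by (intro in_span_listI) auto
  also have "span_list (cols A) = span (set (cols A))" using span_list_as_span[OF cs] .
  finally show ?thesis .
qed

lemma rank_G:
  fixes A :: "real mat"
  assumes A: "A \<in> carrier_mat n nc"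
    and ker: "\<And>x. x \<in> carrier_vec n \<Longrightarrow> (\<forall>c\<in>set (cols A). x \<bullet> c = 0) \<Longrightarrow> x = 0\<^sub>v n"
  shows "vec_space.rank n A = n"
proof -
  interpret vec_space "TYPE(real)" n .
  define M where "M = A * transpose_mat A"
  have M: "M \<in> carrier_mat n n" using A unfolding M_def by auto
  have inj: "v = 0\<^sub>v n" if v: "v \<in> carrier_vec n" "M *\<^sub>v v = 0\<^sub>v n" for v
  proof -
    define w where "w = transpose_mat A *\<^sub>v v"
    have w: "w \<in> carrier_vec nc" using A v unfolding w_def by auto
    have "w \<bullet> w = v \<bullet> (A *\<^sub>v w)" unfolding w_def
      using transpose_vec_mult_scalar[OF A w v(1)] w_def by simp
    also have "A *\<^sub>v w = M *\<^sub>v v" unfolding M_def w_def using A v by auto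
    finally have "w \<bullet> w = 0" using v by simp
    hence w0: "w = 0\<^sub>v nc" using self_sprod_zero w by blast
    show ?thesis
    proof (rule ker[OF v(1)], intro ballI)
      fix c assume "c \<in> set (cols A)"
      then obtain j where j: "j < nc" "c = col A j" using A by (auto simp: in_set_conv_nth)
      have "w $ j = col A j \<bullet> v" unfolding w_def using A j by auto
      hence "col A j \<bullet> v = 0" using w0 j by simp
      thus "v \<bullet> c = 0" using j comm_scalar_prod[of v n c] A v by auto
    qed
  qed
  have "det M \<noteq> 0" using det_0_iff_vec_prod_zero_field[OF M] inj by blast
  hence "vec_space.rank n M = n" using vec_space.det_rank_iff[OF M] by simp
  hence sM: "span (set (cols M)) = carrier_vec n" using vec_space.rank_full_span[OF M] by simp
  have sub: "set (cols M) \<subseteq> span (set (cols A))"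
  proof
    fix c assume "c \<in> set (cols M)"
    then obtain j where j: "j < n" "c = col M j" using M by (auto simp: in_set_conv_nth)
    have "c = A *\<^sub>v col (transpose_mat A) j" using j A unfolding M_def by auto
    thus "c \<in> span (set (cols A))"
      using vec_space.mult_in_span[OF A, of "col (transpose_mat A) j"] A j by auto
  qed
  have csA: "set (cols A) \<subseteq> carrier_vec n" using A cols_dim by blast
  have "span (set (cols A)) = carrier_vec n"
  proof
    show "span (set (cols A)) \<subseteq> carrier_vec n" using csA span_closed by blast
    have "span (set (cols M)) \<subseteq> span (set (cols A))"
      using span_subsetI[OF csA sub] .
    thus "carrier_vec n \<subseteq> span (set (cols A))" using sM by simp
  qed
  thus ?thesis using vec_space.span_full_rank[OF A] by simp
qed

lemma rank_H:
  fixes A :: "real mat"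
  assumes A: "A \<in> carrier_mat n nc" and x: "x \<in> carrier_vec n" "x \<noteq> 0\<^sub>v n"
    and orth: "\<forall>c\<in>set (cols A). x \<bullet> c = 0"
  shows "vec_space.rank n A \<noteq> n"
proof
  interpret vec_space "TYPE(real)" n .
  assume "vec_space.rank n A = n"
  hence s: "span (set (cols A)) = carrier_vec n" using vec_space.rank_full_span[OF A] by simp
  have csA: "set (cols A) \<subseteq> carrier_vec n" using A cols_dim by blast
  have "x \<in> vec_module.orthogonal_complement n (set (cols A))"
    using x orth unfolding vec_module.orthogonal_complement_def by auto
  hence "x \<in> vec_module.orthogonal_complement n (span (set (cols A)))"
    using vec_space.in_orthogonal_complement_span[OF csA] by simp
  hence "x \<bullet> x = 0" using s x unfolding vec_module.orthogonal_complement_def by auto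
  thus False using self_sprod_zero x by blast
qed


lemma rows_zero_iff:
  fixes Q :: "real mat"
  assumes Q: "Q \<in> carrier_mat N n" and x: "x \<in> carrier_vec n"
  shows "(\<forall>r\<in>set (rows Q). r \<bullet> x = 0) \<longleftrightarrow> Q *\<^sub>v x = 0\<^sub>v N"
proof
  assume "\<forall>r\<in>set (rows Q). r \<bullet> x = 0"
  hence "\<forall>i<N. row Q i \<bullet> x = 0" using Q by (metis carrier_matD(1) length_rows nth_mem nth_rows)
  thus "Q *\<^sub>v x = 0\<^sub>v N" using Q by (intro eq_vecI) auto
next
  assume z: "Q *\<^sub>v x = 0\<^sub>v N"
  show "\<forall>r\<in>set (rows Q). r \<bullet> x = 0"
  proof
    fix r assume "r \<in> set (rows Q)"
    then obtain i where i: "i < N" "r = row Q i" using Q by (auto simp: in_set_conv_nth)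
    have "(Q *\<^sub>v x) $ i = row Q i \<bullet> x" using Q i by auto
    thus "r \<bullet> x = 0" using z i by simp
  qed
qed

lemma rank_GO:
  fixes Q :: "real mat"
  assumes Q: "Q \<in> carrier_mat N n"
    and ker: "\<And>x. x \<in> carrier_vec n \<Longrightarrow> Q *\<^sub>v x = 0\<^sub>v N \<Longrightarrow> x = 0\<^sub>v n"
  shows "vec_space.rank N Q = n"
proof -
  interpret vec_space "TYPE(real)" N .
  have dist: "distinct (cols Q)"
  proof (rule ccontr)
    assume "\<not> distinct (cols Q)"
    then obtain i j where ij: "i < n" "j < n" "i \<noteq> j" "cols Q ! i = cols Q ! j"
      using Q by (auto simp: distinct_conv_nth)
    hence cij0: "col Q i = col Q j" using Q by simp
    define x :: "real vec" where "x = unit_vec n i - unit_vec n j"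
    have xc: "x \<in> carrier_vec n" unfolding x_def by simp
    have "Q *\<^sub>v x = 0\<^sub>v N"
    proof (rule eq_vecI)
      fix k assume "k < dim_vec (0\<^sub>v N :: real vec)"
      hence k: "k < N" by simp
      have "(Q *\<^sub>v x) $ k = row Q k \<bullet> x" using Q k by auto
      also have "\<dots> = row Q k \<bullet> unit_vec n i - row Q k \<bullet> unit_vec n j"
        unfolding x_def using Q k by (intro scalar_prod_minus_distrib[of _ n]) auto
      also have "\<dots> = Q $$ (k, i) - Q $$ (k, j)" using Q k ij by simp
      also have "\<dots> = col Q i $ k - col Q j $ k" using Q k ij(1,2) by simp
      finally show "(Q *\<^sub>v x) $ k = 0\<^sub>v N $ k" using cij0 k by simp
    qed (use Q in auto)
    hence "x = 0\<^sub>v n" using ker xc by blast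
    moreover have "x $ i = 1" unfolding x_def using ij by simp
    ultimately show False using ij by simp
  qed
  have "lin_indpt (set (cols Q))"
  proof
    assume "lin_dep (set (cols Q))"
    then obtain v where "v \<in> carrier_vec n" "v \<noteq> 0\<^sub>v n" "Q *\<^sub>v v = 0\<^sub>v N"
      using lin_depE[OF Q _ dist] by blast
    thus False using ker by blast
  qed
  thus ?thesis using lin_indpt_full_rank[OF Q dist] by simp
qed

lemma rank_HO:
  fixes Q :: "real mat"
  assumes Q: "Q \<in> carrier_mat N n" and x: "x \<in> carrier_vec n" "x \<noteq> 0\<^sub>v n"
    and z: "Q *\<^sub>v x = 0\<^sub>v N"
  shows "vec_space.rank N Q \<noteq> n"
proof
  interpret vec_space "TYPE(real)" N .
  assume r: "rank Q = n"
  show False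
  proof (cases "distinct (cols Q)")
    case True
    have "lin_indpt (set (cols Q))" using full_rank_lin_indpt[OF Q r True] .
    moreover have "lin_dep (set (cols Q))" using lin_depI[OF Q x z True] .
    ultimately show False by simp
  next
    case False
    have e: "lin_indpt {}"
      by (metis (no_types) empty_subsetI fin_dim finite_basis_exists subset_li_is_li vec_vs vectorspace.basis_def)
    obtain S where S: "finite S" "maximal S (\<lambda>T. T \<subseteq> set (cols Q) \<and> lin_indpt T)"
      using maximal_exists_superset[of "set (cols Q)" "(\<lambda>T. T \<subseteq> set (cols Q) \<and> lin_indpt T)" "{}"] e
      by auto
    have "card S \<le> card (set (cols Q))" using S(2) unfolding maximal_def by (simp add: card_mono)
    also have "\<dots> < length (cols Q)" using False card_distinct card_length le_neq_implies_less by blast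
    finally have "card S < n" using Q by simp
    thus False using rank_card_indpt[OF Q S(2)] r by simp
  qed
qed


lemma mod_succ: "j < (n::nat) \<Longrightarrow> (j + 1) mod n = (if j = n - 1 then 0 else j + 1)"
proof (cases "j = n - 1")
  case True
  assume "j < n" hence "j + 1 = n" using True by simp
  thus ?thesis using True by simp
next
  case False
  assume "j < n" hence "j + 1 < n" using False by simp
  thus ?thesis using False by simp
qed

lemma L_carrier[simp]: "cycle_laplacian n \<in> carrier_mat n n"
  unfolding cycle_laplacian_def by auto

lemma L_sym: "transpose_mat (cycle_laplacian n) = cycle_laplacian n"
proof (rule eq_matI)
  fix i j assume "i < dim_row (cycle_laplacian n)" "j < dim_col (cycle_laplacian n)"
  hence ij: "i < n" "j < n" unfolding cycle_laplacian_def by auto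
  have e: "(i = (j + 1) mod n \<or> j = (i + 1) mod n) = (j = (i + 1) mod n \<or> i = (j + 1) mod n)" by blast
  show "transpose_mat (cycle_laplacian n) $$ (i, j) = cycle_laplacian n $$ (i, j)"
    using ij unfolding cycle_laplacian_def by (simp only: index_transpose_mat index_mat dim_row_mat dim_col_mat split e, simp)
qed (auto simp: cycle_laplacian_def)

lemma pow_comm: "(A :: 'a :: semiring_1 mat) \<in> carrier_mat n n \<Longrightarrow> A * A ^\<^sub>m k = A ^\<^sub>m k * A"
proof (induction k)
  case 0 thus ?case by simp
next
  case (Suc k)
  have "A * A ^\<^sub>m Suc k = (A * A ^\<^sub>m k) * A" using Suc.prems by (simp add: assoc_mult_mat[of _ n n _ n _ n])
  also have "\<dots> = A ^\<^sub>m Suc k * A" using Suc by simp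
  finally show ?case .
qed

lemma L_pow_sym: "transpose_mat (cycle_laplacian n ^\<^sub>m k) = cycle_laplacian n ^\<^sub>m k"
proof (induction k)
  case 0 thus ?case by (simp add: cycle_laplacian_def)
next
  case (Suc k)
  let ?L = "cycle_laplacian n"
  have "transpose_mat (?L ^\<^sub>m Suc k) = transpose_mat ?L * transpose_mat (?L ^\<^sub>m k)"
    by (simp add: transpose_mult[of _ n n _ n])
  also have "\<dots> = ?L * ?L ^\<^sub>m k" using Suc L_sym by simp
  also have "\<dots> = ?L ^\<^sub>m Suc k" using pow_comm[OF L_carrier] by simp
  finally show ?case .
qed

lemma L_row:
  assumes n: "n \<ge> 3" and i: "i < n" and y: "y \<in> carrier_vec n"
  shows "(cycle_laplacian n *\<^sub>v y) $ i = 2 * y $ i - y $ (if i = n - 1 then 0 else i + 1)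
           - y $ (if i = 0 then n - 1 else i - 1)"
proof -
  define p where "p = (if i = n - 1 then 0 else i + 1)"
  define q where "q = (if i = 0 then n - 1 else i - 1)"
  have pq: "p < n" "q < n" "p \<noteq> i" "q \<noteq> i" "p \<noteq> q" using n i unfolding p_def q_def by auto
  have c: "cycle_laplacian n $$ (i, j) * y $ j =
       (if j = i then 2 * y $ i else 0) - (if j = p then y $ p else 0) - (if j = q then y $ q else 0)"
    if j: "j < n" for j
  proof -
    have "(j = (i + 1) mod n \<or> i = (j + 1) mod n) \<longleftrightarrow> (j = p \<or> j = q)"
      using mod_succ[OF i] mod_succ[OF j] n i j unfolding p_def q_def by auto
    thus ?thesis using i j pq unfolding cycle_laplacian_def by (simp only: index_mat split) (auto simp del: One_nat_def)
  qed
  have "(cycle_laplacian n *\<^sub>v y) $ i = (\<Sum>j\<in>{0..<n}. cycle_laplacian n $$ (i, j) * y $ j)"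
  proof -
    have d: "dim_row (cycle_laplacian n) = n" "dim_col (cycle_laplacian n) = n"
      by (simp_all add: cycle_laplacian_def)
    show ?thesis using i y d by (auto simp: scalar_prod_def intro!: sum.cong)
  qed
  also have "\<dots> = (\<Sum>j\<in>{0..<n}. (if j = i then 2 * y $ i else 0) - (if j = p then y $ p else 0) - (if j = q then y $ q else 0))"
    by (rule sum.cong) (auto simp: c)
  also have "\<dots> = 2 * y $ i - y $ p - y $ q"
    using i pq by (simp add: sum_subtractf)
  finally show ?thesis unfolding p_def q_def .
qed


lemma B_carrier[simp]: "input_mat n i1 i2 \<in> carrier_mat n 2"
  unfolding input_mat_def by (rule carrier_matI) simp_all

lemma B_dims[simp]: "dim_row (input_mat n i1 i2) = n" "dim_col (input_mat n i1 i2) = 2"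
  unfolding input_mat_def by simp_all

lemma Lpow_vec_carrier[simp]: "cycle_laplacian n ^\<^sub>m k *\<^sub>v w \<in> carrier_vec n"
proof -
  have "dim_row (cycle_laplacian n) = n" by (simp add: cycle_laplacian_def)
  thus ?thesis by (intro carrier_vecI) simp
qed

lemma len_concat2: "length (concat (map (\<lambda>k. [f k, g k]) xs)) = 2 * length xs"
  by (induction xs) auto

lemma cols_LB:
  "cols (cycle_laplacian n ^\<^sub>m k * input_mat n i1 i2)
     = [cycle_laplacian n ^\<^sub>m k *\<^sub>v unit_vec n (i1 - 1), cycle_laplacian n ^\<^sub>m k *\<^sub>v unit_vec n (i2 - 1)]"
proof -
  let ?L = "cycle_laplacian n" and ?B = "input_mat n i1 i2"
  have P: "?L ^\<^sub>m k \<in> carrier_mat n n" by simp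
  have cB: "col ?B 0 = unit_vec n (i1 - 1)" "col ?B 1 = unit_vec n (i2 - 1)"
    unfolding input_mat_def by (subst col_mat_of_cols; simp)+
  show ?thesis
  proof (rule nth_equalityI)
    show "length (cols (?L ^\<^sub>m k * ?B)) = length [?L ^\<^sub>m k *\<^sub>v unit_vec n (i1 - 1), ?L ^\<^sub>m k *\<^sub>v unit_vec n (i2 - 1)]"
      using P B_carrier[of n i1 i2] by (simp del: B_carrier)
    fix j assume "j < length (cols (?L ^\<^sub>m k * ?B))"
    hence j: "j < 2" using P B_carrier[of n i1 i2] by (simp del: B_carrier)
    have "cols (?L ^\<^sub>m k * ?B) ! j = col (?L ^\<^sub>m k * ?B) j" using j P by simp
    also have "\<dots> = ?L ^\<^sub>m k *\<^sub>v col ?B j" using j P by (intro col_mult2[of _ n n _ 2]) auto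
    finally have "cols (?L ^\<^sub>m k * ?B) ! j = ?L ^\<^sub>m k *\<^sub>v col ?B j" .
    thus "cols (?L ^\<^sub>m k * ?B) ! j = [?L ^\<^sub>m k *\<^sub>v unit_vec n (i1 - 1), ?L ^\<^sub>m k *\<^sub>v unit_vec n (i2 - 1)] ! j"
      using j cB by (cases j) (auto simp: numeral_2_eq_2 less_Suc_eq)
  qed
qed

lemma reach_facts:
  fixes n i1 i2 :: nat
  defines "R \<equiv> reach_mat (cycle_laplacian n) (input_mat n i1 i2)"
  shows "R \<in> carrier_mat n (2 * n)"
    and "set (cols R) = (\<Union>k<n. {cycle_laplacian n ^\<^sub>m k *\<^sub>v unit_vec n (i1 - 1),
                                   cycle_laplacian n ^\<^sub>m k *\<^sub>v unit_vec n (i2 - 1)})"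
proof -
  let ?L = "cycle_laplacian n" and ?B = "input_mat n i1 i2"
  have dL: "dim_row ?L = n" by (simp add: cycle_laplacian_def)
  let ?xs = "concat (map (\<lambda>k. cols ((?L ^\<^sub>m k) * ?B)) [0..<n])"
  have xs: "?xs = concat (map (\<lambda>k. [?L ^\<^sub>m k *\<^sub>v unit_vec n (i1 - 1), ?L ^\<^sub>m k *\<^sub>v unit_vec n (i2 - 1)]) [0..<n])"
    using cols_LB by simp
  have len: "length ?xs = 2 * n" unfolding xs len_concat2 by simp
  have Rd: "R = mat_of_cols n ?xs" unfolding R_def reach_mat_def dL ..
  show "R \<in> carrier_mat n (2 * n)" unfolding Rd by (rule carrier_matI) (simp_all add: len)
  have sub: "set ?xs \<subseteq> carrier_vec n" unfolding xs by auto
  show "set (cols R) = (\<Union>k<n. {?L ^\<^sub>m k *\<^sub>v unit_vec n (i1 - 1), ?L ^\<^sub>m k *\<^sub>v unit_vec n (i2 - 1)})"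
    unfolding Rd cols_mat_of_cols[OF sub] unfolding xs by auto
qed

lemma obs_facts:
  fixes n i1 i2 :: nat
  defines "Q \<equiv> obs_mat (cycle_laplacian n) (transpose_mat (input_mat n i1 i2))"
  shows "Q \<in> carrier_mat (2 * n) n"
    and "set (rows Q) = (\<Union>k<n. {cycle_laplacian n ^\<^sub>m k *\<^sub>v unit_vec n (i1 - 1),
                                   cycle_laplacian n ^\<^sub>m k *\<^sub>v unit_vec n (i2 - 1)})"
proof -
  let ?L = "cycle_laplacian n" and ?B = "input_mat n i1 i2"
  have dL: "dim_row ?L = n" by (simp add: cycle_laplacian_def)
  have rw: "rows (transpose_mat ?B * ?L ^\<^sub>m k) = cols (?L ^\<^sub>m k * ?B)" for k
  proof -
    have "transpose_mat (transpose_mat ?B * ?L ^\<^sub>m k) = transpose_mat (?L ^\<^sub>m k) * transpose_mat (transpose_mat ?B)"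
      by (rule transpose_mult[of _ 2 n _ n]) auto
    also have "\<dots> = ?L ^\<^sub>m k * ?B" using L_pow_sym by simp
    finally have "cols (transpose_mat (transpose_mat ?B * ?L ^\<^sub>m k)) = cols (?L ^\<^sub>m k * ?B)" by simp
    thus ?thesis by simp
  qed
  let ?xs = "concat (map (\<lambda>k. rows (transpose_mat ?B * (?L ^\<^sub>m k))) [0..<n])"
  have xs: "?xs = concat (map (\<lambda>k. [?L ^\<^sub>m k *\<^sub>v unit_vec n (i1 - 1), ?L ^\<^sub>m k *\<^sub>v unit_vec n (i2 - 1)]) [0..<n])"
    using cols_LB rw by simp
  have len: "length ?xs = 2 * n" unfolding xs len_concat2 by simp
  have Qd: "Q = mat_of_rows n ?xs" unfolding Q_def obs_mat_def dL ..
  show "Q \<in> carrier_mat (2 * n) n" unfolding Qd by (rule carrier_matI) (simp_all add: len)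
  have sub: "set ?xs \<subseteq> carrier_vec n" unfolding xs by auto
  show "set (rows Q) = (\<Union>k<n. {?L ^\<^sub>m k *\<^sub>v unit_vec n (i1 - 1), ?L ^\<^sub>m k *\<^sub>v unit_vec n (i2 - 1)})"
    unfolding Qd rows_mat_of_rows[OF sub] unfolding xs by auto
qed

lemma ker_char:
  assumes x: "x \<in> carrier_vec n" and a: "a < n" and b: "b < n"
  shows "(\<forall>c\<in>(\<Union>k<n. {cycle_laplacian n ^\<^sub>m k *\<^sub>v unit_vec n a,
                                   cycle_laplacian n ^\<^sub>m k *\<^sub>v unit_vec n b}). x \<bullet> c = 0)
    \<longleftrightarrow> (\<forall>k<n. (cycle_laplacian n ^\<^sub>m k *\<^sub>v x) $ a = 0 \<and> (cycle_laplacian n ^\<^sub>m k *\<^sub>v x) $ b = 0)"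
proof -
  let ?L = "cycle_laplacian n"
  have e: "x \<bullet> (?L ^\<^sub>m k *\<^sub>v unit_vec n c) = (?L ^\<^sub>m k *\<^sub>v x) $ c" if c: "c < n" for k c
  proof -
    have "x \<bullet> (?L ^\<^sub>m k *\<^sub>v unit_vec n c) = (transpose_mat (?L ^\<^sub>m k) *\<^sub>v x) \<bullet> unit_vec n c"
      by (rule transpose_vec_mult_scalar[symmetric, of _ n n]) (simp_all add: x)
    also have "\<dots> = (?L ^\<^sub>m k *\<^sub>v x) $ c" using L_pow_sym c by simp
    finally show ?thesis .
  qed
  have "(\<forall>c\<in>(\<Union>k<n. {?L ^\<^sub>m k *\<^sub>v unit_vec n a, ?L ^\<^sub>m k *\<^sub>v unit_vec n b}). x \<bullet> c = 0)
     \<longleftrightarrow> (\<forall>k<n. x \<bullet> (?L ^\<^sub>m k *\<^sub>v unit_vec n a) = 0 \<and> x \<bullet> (?L ^\<^sub>m k *\<^sub>v unit_vec n b) = 0)"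
    by blast
  also have "\<dots> \<longleftrightarrow> (\<forall>k<n. (?L ^\<^sub>m k *\<^sub>v x) $ a = 0 \<and> (?L ^\<^sub>m k *\<^sub>v x) $ b = 0)"
    by (simp only: e[OF a] e[OF b])
  finally show ?thesis .
qed



lemma refl_odd:
  fixes F :: "nat \<Rightarrow> int \<Rightarrow> real" and n :: nat and a :: int
  assumes n: "n \<ge> 1"
    and per: "\<And>k j. F k (j mod int n) = F k j"
    and rec: "\<And>k j. F (Suc k) j = 2 * F k j - F k (j + 1) - F k (j - 1)"
    and za: "\<And>k. k < n \<Longrightarrow> F k a = 0"
  shows "F 0 (a + m) = - F 0 (a - m)"
proof -
  define \<sigma> where "\<sigma> k m = F k (a + m) + F k (a - m)" for k m
  have srec: "\<sigma> (Suc k) m = 2 * \<sigma> k m - \<sigma> k (m + 1) - \<sigma> k (m - 1)" for k m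
  proof -
    have "\<sigma> (Suc k) m = (2 * F k (a + m) - F k (a + m + 1) - F k (a + m - 1))
         + (2 * F k (a - m) - F k (a - m + 1) - F k (a - m - 1))"
      unfolding \<sigma>_def rec ..
    also have "\<dots> = 2 * \<sigma> k m - \<sigma> k (m + 1) - \<sigma> k (m - 1)"
      unfolding \<sigma>_def by (simp add: algebra_simps)
    finally show ?thesis .
  qed
  have s0: "\<sigma> k 0 = 0" if "k < n" for k using za[OF that] unfolding \<sigma>_def by simp
  have main: "\<forall>k. k + m < n \<longrightarrow> \<sigma> k (int m) = 0" for m :: nat
  proof (induction m rule: less_induct)
    case (less m)
    show ?case
    proof (cases m)
      case 0 thus ?thesis using s0 by simp
    next
      case (Suc m')
      show ?thesis
      proof (cases m')
        case 0
        show ?thesis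
        proof (intro allI impI)
          fix k assume k: "k + m < n"
          have "\<sigma> (Suc k) 0 = 2 * \<sigma> k 0 - \<sigma> k 1 - \<sigma> k (-1)" using srec[of k 0] by simp
          moreover have "\<sigma> k (-1) = \<sigma> k 1" unfolding \<sigma>_def by simp
          moreover have "\<sigma> (Suc k) 0 = 0" "\<sigma> k 0 = 0" using s0 k Suc 0 by auto
          ultimately show "\<sigma> k (int m) = 0" using Suc 0 by simp
        qed
      next
        case (Suc m'')
        show ?thesis
        proof (intro allI impI)
          fix k assume k: "k + m < n"
          have m: "m = Suc (Suc m'')" using \<open>m = Suc m'\<close> Suc by simp
          have A: "\<sigma> (Suc k) (int m'' + 1) = 2 * \<sigma> k (int m'' + 1) - \<sigma> k (int m'' + 1 + 1) - \<sigma> k (int m'' + 1 - 1)"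
            by (rule srec)
          have e: "int m'' + 1 + 1 = int m" "int m'' + 1 - 1 = int m''" "int m'' + 1 = int (Suc m'')" using m by simp_all
          moreover have "\<sigma> (Suc k) (int (Suc m'')) = 0" using less.IH[of "Suc m''"] m k by auto
          moreover have "\<sigma> k (int (Suc m'')) = 0" using less.IH[of "Suc m''"] m k by auto
          moreover have "\<sigma> k (int m'') = 0" using less.IH[of "m''"] m k by auto
          ultimately show "\<sigma> k (int m) = 0" using A unfolding e by simp
        qed
      qed
    qed
  qed
  have pa: "F 0 (a + m) = F 0 (a + m mod int n)" for m
  proof -
    have "F 0 (a + m) = F 0 ((a + m) mod int n)" using per by simp
    also have "(a + m) mod int n = (a + m mod int n) mod int n" by (simp add: mod_simps)
    also have "F 0 \<dots> = F 0 (a + m mod int n)" using per by simp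
    finally show ?thesis .
  qed
  have pb: "F 0 (a - m) = F 0 (a - m mod int n)" for m
  proof -
    have "F 0 (a - m) = F 0 ((a - m) mod int n)" using per by simp
    also have "(a - m) mod int n = (a - m mod int n) mod int n" by (simp add: mod_simps)
    also have "F 0 \<dots> = F 0 (a - m mod int n)" using per by simp
    finally show ?thesis .
  qed
  define r where "r = nat (m mod int n)"
  have r0: "0 \<le> m mod int n" "m mod int n < int n" using n by simp_all
  have r: "int r = m mod int n" "r < n" unfolding r_def using r0 nat_less_iff[of "m mod int n" n] by simp_all
  have "\<sigma> 0 (int r) = 0" using main[of r] r by simp
  hence "F 0 (a + m mod int n) + F 0 (a - m mod int n) = 0" unfolding \<sigma>_def r by simp
  thus ?thesis using pa pb by simp
qed

lemma cyc_prime: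
  fixes F :: "nat \<Rightarrow> int \<Rightarrow> real" and n :: nat and a b :: int
  assumes p: "prime n" and n: "n \<ge> 3"
    and per: "\<And>k j. F k (j mod int n) = F k j"
    and rec: "\<And>k j. F (Suc k) j = 2 * F k j - F k (j + 1) - F k (j - 1)"
    and za: "\<And>k. k < n \<Longrightarrow> F k a = 0"
    and zb: "\<And>k. k < n \<Longrightarrow> F k b = 0"
    and ab: "\<not> int n dvd (a - b)"
  shows "F 0 j = 0"
proof -
  define G where "G = F 0"
  have ga: "G y = - G (2 * a - y)" for y
    using refl_odd[of n F a "y - a", OF _ per rec za] n unfolding G_def by simp
  have gb: "G y = - G (2 * b - y)" for y
    using refl_odd[of n F b "y - b", OF _ per rec zb] n unfolding G_def by simp
  define c where "c = 2 * (a - b)"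
  have pc: "G (x + c) = G x" for x
    using gb[of x] ga[of "2 * b - x"] unfolding c_def by (simp add: algebra_simps)
  have pn: "G (x + int n) = G x" for x
    using per[of 0 "x + int n"] per[of 0 x] unfolding G_def by simp
  have mult: "G (x + t * k) = G x" if t: "\<And>x. G (x + t) = G x" for t k x
  proof -
    have pos: "G (x + t * int m) = G x" for m x
    proof (induction m arbitrary: x)
      case 0 thus ?case by simp
    next
      case (Suc m)
      have "G (x + t * int (Suc m)) = G ((x + t * int m) + t)" by (simp add: algebra_simps)
      also have "\<dots> = G x" using t Suc by simp
      finally show ?case .
    qed
    show ?thesis
    proof (cases "k \<ge> 0")
      case True
      then obtain m where "k = int m" using nonneg_int_cases by blast
      thus ?thesis using pos by simp
    next
      case False
      then obtain m where m: "k = - int m" by (metis minus_minus nonneg_int_cases neg_0_le_iff_le linorder_not_le less_imp_le)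
      have "G ((x + t * k) + t * int m) = G (x + t * k)" by (rule pos)
      moreover have "(x + t * k) + t * int m = x" using m by (simp add: algebra_simps)
      ultimately show ?thesis by simp
    qed
  qed
  have pint: "prime (int n)" using p by simp
  have nd2: "\<not> int n dvd 2" using n by (auto dest: zdvd_imp_le)
  have "\<not> int n dvd c" unfolding c_def using prime_dvd_mult_iff[OF pint, of 2 "a - b"] nd2 ab by blast
  hence "coprime (int n) c" using prime_imp_coprime[OF pint] by blast
  hence g1: "gcd c (int n) = 1" by (simp add: coprime_commute)
  obtain u v where uv: "u * c + v * int n = 1" using bezout_int[of c "int n"] g1 by auto
  have p1: "G (x + 1) = G x" for x
  proof -
    have "G (x + 1) = G ((x + v * int n) + c * u)" using uv by (simp add: algebra_simps)
    also have "\<dots> = G (x + v * int n)" using mult[of c] pc by blast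
    also have "\<dots> = G (x + int n * v)" by (simp add: algebra_simps)
    also have "\<dots> = G x" using mult[of "int n"] pn by blast
    finally show ?thesis .
  qed
  have "G a = 0" using za[of 0] n unfolding G_def by simp
  hence "G (a + 1 * k) = 0" for k using mult[of 1, OF p1] by metis
  from this[of "j - a"] show ?thesis unfolding G_def by simp
qed



lemma sin_nat_period: "sin (y + 2 * pi * real r) = sin y"
proof (induction r)
  case 0 thus ?case by simp
next
  case (Suc r)
  have "sin (y + 2 * pi * real (Suc r)) = sin ((y + 2 * pi * real r) + 2 * pi)" by (simp add: algebra_simps)
  also have "\<dots> = sin y" using Suc by (simp only: sin_periodic)
  finally show ?case .
qed

lemma composite_split:
  fixes n :: nat
  assumes n: "n \<ge> 3" and np: "\<not> prime n"
  shows "\<exists>m d. m dvd n \<and> m \<ge> 3 \<and> 0 < d \<and> d < n \<and> m dvd 2 * d"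
proof -
  obtain a where a: "a dvd n" "a \<noteq> 1" "a \<noteq> n"
    using np n unfolding prime_nat_iff by auto
  obtain b where b: "n = a * b" using a(1) by blast
  have a2: "a \<ge> 2" using a b n by (cases a) auto
  have b2: "b \<ge> 2" using a b n by (cases b) auto
  have alt: "a < n" using b b2 a2 by simp
  have blt: "b < n" using b a2 b2 by simp
  show ?thesis
  proof (cases "a \<ge> 3")
    case True thus ?thesis using a alt a2 by (intro exI[of _ a] exI[of _ a]) auto
  next
    case False
    note aF = False
    show ?thesis
    proof (cases "b \<ge> 3")
      case True thus ?thesis using b blt b2 by (intro exI[of _ b] exI[of _ b]) auto
    next
      case False
      hence "a = 2" "b = 2" using aF a2 b2 by auto
      hence "n = 4" using b by simp
      thus ?thesis by (intro exI[of _ 4] exI[of _ 2]) auto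
    qed
  qed
qed

lemma cyc_comp:
  fixes n :: nat
  assumes n: "n \<ge> 3" and np: "\<not> prime n"
  shows "\<exists>d x. 0 < d \<and> d < n \<and> x \<in> carrier_vec n \<and> x \<noteq> 0\<^sub>v n \<and>
     (\<forall>k. (cycle_laplacian n ^\<^sub>m k *\<^sub>v x) $ 0 = 0 \<and> (cycle_laplacian n ^\<^sub>m k *\<^sub>v x) $ d = 0)"
proof -
  obtain m d where md: "m dvd n" "m \<ge> 3" "0 < d" "d < n" "m dvd 2 * d"
    using composite_split[OF n np] by blast
  obtain r where r: "n = m * r" using md(1) by blast
  obtain l where l: "2 * d = m * l" using md(5) by blast
  have mpos: "real m > 0" using md(2) by simp
  define s where "s t = sin (2 * pi * t / real m)" for t
  have sper: "s (t + real n) = s t" for t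
  proof -
    have "2 * pi * (t + real n) / real m = 2 * pi * t / real m + 2 * pi * real r"
      using mpos r by (simp add: field_simps)
    thus ?thesis unfolding s_def using sin_nat_period by simp
  qed
  define x :: "real vec" where "x = vec n (\<lambda>j. s (real j))"
  define lam where "lam = 2 - 2 * cos (2 * pi / real m)"
  let ?L = "cycle_laplacian n"
  have xc: "x \<in> carrier_vec n" unfolding x_def by simp
  have eig: "?L *\<^sub>v x = lam \<cdot>\<^sub>v x"
  proof (rule eq_vecI)
    fix i assume "i < dim_vec (lam \<cdot>\<^sub>v x)"
    hence i: "i < n" unfolding x_def by simp
    have xp: "x $ (if i = n - 1 then 0 else i + 1) = s (real i + 1)"
    proof (cases "i = n - 1")
      case True
      have "s (real i + 1) = s (0 + real n)" using True n by (simp add: of_nat_diff)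
      also have "\<dots> = s 0" using sper by blast
      finally show ?thesis using True n unfolding x_def by simp
    next
      case False
      have "i + 1 < n" using False i by simp
      hence "x $ (i + 1) = s (real (i + 1))" unfolding x_def by (simp only: index_vec)
      moreover have "real (i + 1) = real i + 1" by simp
      ultimately show ?thesis using False by (simp add: add.commute)
    qed
    have xq: "x $ (if i = 0 then n - 1 else i - 1) = s (real i - 1)"
    proof (cases "i = 0")
      case True
      have "s (real (n - 1)) = s (-1 + real n)" using n by (simp add: of_nat_diff)
      also have "\<dots> = s (-1)" using sper by blast
      finally show ?thesis using True n unfolding x_def by simp
    next
      case False
      have "i - 1 < n" using i by simp
      hence "x $ (i - 1) = s (real (i - 1))" unfolding x_def by (simp only: index_vec)
      moreover have "real (i - 1) = real i - 1" using False by (simp add: of_nat_diff)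
      ultimately show ?thesis using False by simp
    qed
    have "(?L *\<^sub>v x) $ i = 2 * s (real i) - s (real i + 1) - s (real i - 1)"
      using L_row[OF n i xc] xp xq i unfolding x_def by simp
    also have "\<dots> = lam * s (real i)"
    proof -
      define th where "th = 2 * pi * real i / real m"
      define h where "h = 2 * pi / real m"
      have "s (real i + 1) = sin (th + h)" "s (real i - 1) = sin (th - h)" "s (real i) = sin th"
        unfolding s_def th_def h_def using mpos by (simp_all add: field_simps)
      hence "2 * s (real i) - s (real i + 1) - s (real i - 1) = 2 * sin th - sin (th + h) - sin (th - h)" by simp
      also have "\<dots> = (2 - 2 * cos h) * sin th" by (simp add: sin_add sin_diff algebra_simps)
      finally show ?thesis unfolding lam_def h_def[symmetric] using \<open>s (real i) = sin th\<close> by simp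
    qed
    also have "\<dots> = (lam \<cdot>\<^sub>v x) $ i" using i unfolding x_def by simp
    finally show "(?L *\<^sub>v x) $ i = (lam \<cdot>\<^sub>v x) $ i" .
  qed (simp add: x_def cycle_laplacian_def)
  have powk: "?L ^\<^sub>m k *\<^sub>v x = lam ^ k \<cdot>\<^sub>v x" for k
  proof (induction k)
    case 0 thus ?case using xc by (simp add: cycle_laplacian_def)
  next
    case (Suc k)
    have "?L ^\<^sub>m Suc k *\<^sub>v x = ?L ^\<^sub>m k *\<^sub>v (?L *\<^sub>v x)"
      using xc by (simp add: assoc_mult_mat_vec[of _ n n _ n])
    also have "\<dots> = lam \<cdot>\<^sub>v (?L ^\<^sub>m k *\<^sub>v x)" unfolding eig
      by (rule mult_mat_vec[OF pow_carrier_mat[OF L_carrier] xc])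
    also have "\<dots> = lam ^ Suc k \<cdot>\<^sub>v x" unfolding Suc by (simp add: smult_smult_assoc)
    finally show ?case .
  qed
  have x0: "x $ 0 = 0" using n unfolding x_def s_def by simp
  have xd: "x $ d = 0"
  proof -
    have "2 * pi * real d / real m = pi * real l"
    proof -
      have e: "2 * real d = real m * real l" using arg_cong[OF l, of real] by simp
      have "2 * pi * real d / real m = pi * (2 * real d) / real m" by simp
      also have "\<dots> = pi * real l" unfolding e using mpos by simp
      finally show ?thesis .
    qed
    thus ?thesis using md unfolding x_def s_def by simp
  qed
  have xnz: "x \<noteq> 0\<^sub>v n"
  proof
    assume "x = 0\<^sub>v n"
    hence "x $ 1 = 0" using n by simp
    moreover have "0 < sin (2 * pi / real m)"
      using mpos md(2) by (intro sin_gt_zero) (auto simp: field_simps)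
    ultimately show False using n unfolding x_def s_def by simp
  qed
  show ?thesis
    using md xc xnz x0 xd powk xc by (intro exI[of _ d] exI[of _ x]) simp
qed



lemma idx_succ:
  fixes j :: int and n :: nat
  assumes n: "n \<ge> 1"
  shows "nat ((j + 1) mod int n) = (if nat (j mod int n) = n - 1 then 0 else nat (j mod int n) + 1)"
proof -
  define t where "t = j mod int n"
  have t: "0 \<le> t" "t < int n" using n unfolding t_def by simp_all
  have "(j + 1) mod int n = (t + 1) mod int n" unfolding t_def by (simp add: mod_simps)
  moreover have "(t + 1) mod int n = (if t + 1 = int n then 0 else t + 1)" using t by auto
  ultimately show ?thesis using t n unfolding t_def[symmetric] by auto
qed

lemma idx_pred:
  fixes j :: int and n :: nat
  assumes n: "n \<ge> 1"
  shows "nat ((j - 1) mod int n) = (if nat (j mod int n) = 0 then n - 1 else nat (j mod int n) - 1)"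
proof -
  define t where "t = j mod int n"
  have t: "0 \<le> t" "t < int n" using n unfolding t_def by simp_all
  have "(j - 1) mod int n = (t - 1) mod int n" unfolding t_def by (simp add: mod_simps)
  moreover have "(t - 1) mod int n = (if t = 0 then int n - 1 else t - 1)"
  proof (cases "t = 0")
    case True
    have "(-1) mod int n = int n - 1" using n by (simp add: zmod_minus1)
    thus ?thesis using True by simp
  next
    case False thus ?thesis using t by auto
  qed
  ultimately show ?thesis using t n unfolding t_def[symmetric] by (auto simp: nat_diff_distrib)
qed

lemma ker_zero_prime:
  fixes n i1 i2 :: nat and x :: "real vec"
  assumes n: "n \<ge> 3" and p: "prime n"
    and i: "i1 \<in> {1..n}" "i2 \<in> {1..n}" "i1 \<noteq> i2"
    and x: "x \<in> carrier_vec n"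
    and z: "\<forall>k<n. (cycle_laplacian n ^\<^sub>m k *\<^sub>v x) $ (i1 - 1) = 0 \<and> (cycle_laplacian n ^\<^sub>m k *\<^sub>v x) $ (i2 - 1) = 0"
  shows "x = 0\<^sub>v n"
proof -
  let ?L = "cycle_laplacian n"
  define F where "F k j = (?L ^\<^sub>m k *\<^sub>v x) $ nat (j mod int n)" for k and j :: int
  have per: "F k (j mod int n) = F k j" for k j unfolding F_def by simp
  have rec: "F (Suc k) j = 2 * F k j - F k (j + 1) - F k (j - 1)" for k j
  proof -
    define y where "y = ?L ^\<^sub>m k *\<^sub>v x"
    have y: "y \<in> carrier_vec n" unfolding y_def by simp
    define i where "i = nat (j mod int n)"
    have il: "i < n" unfolding i_def using n by (simp add: nat_less_iff)
    have "?L ^\<^sub>m Suc k *\<^sub>v x = ?L *\<^sub>v y"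
    proof -
      have "?L ^\<^sub>m Suc k = ?L * ?L ^\<^sub>m k" using pow_comm[OF L_carrier, of n k] by simp
      thus ?thesis unfolding y_def using x by (simp add: assoc_mult_mat_vec[of _ n n _ n])
    qed
    hence "F (Suc k) j = (?L *\<^sub>v y) $ i" unfolding F_def i_def by simp
    also have "\<dots> = 2 * y $ i - y $ (if i = n - 1 then 0 else i + 1) - y $ (if i = 0 then n - 1 else i - 1)"
      by (rule L_row[OF n il y])
    also have "\<dots> = 2 * F k j - F k (j + 1) - F k (j - 1)"
    proof -
      have s1: "nat ((j + 1) mod int n) = (if i = n - 1 then 0 else i + 1)"
        unfolding i_def using idx_succ[of n j] n by linarith
      have s2: "nat ((j - 1) mod int n) = (if i = 0 then n - 1 else i - 1)"
        unfolding i_def using idx_pred[of n j] n by linarith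
      have "F k j = y $ i" "F k (j + 1) = y $ (if i = n - 1 then 0 else i + 1)"
           "F k (j - 1) = y $ (if i = 0 then n - 1 else i - 1)"
        unfolding F_def y_def[symmetric] i_def[symmetric] s1 s2 by (rule refl)+
      thus ?thesis by simp
    qed
    finally show ?thesis .
  qed
  define a where "a = int (i1 - 1)"
  define b where "b = int (i2 - 1)"
  have ai: "nat (a mod int n) = i1 - 1" "nat (b mod int n) = i2 - 1" 
  proof -
    have "int (i1 - 1) < int n" "int (i2 - 1) < int n" using i by auto
    thus "nat (a mod int n) = i1 - 1" "nat (b mod int n) = i2 - 1" unfolding a_def b_def by simp_all
  qed
  have za: "F k a = 0" if "k < n" for k using z that ai unfolding F_def by simp
  have zb: "F k b = 0" if "k < n" for k using z that ai unfolding F_def by simp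
  have ab: "\<not> int n dvd (a - b)"
  proof
    assume "int n dvd (a - b)"
    moreover have "a - b \<noteq> 0" "\<bar>a - b\<bar> < int n" using i unfolding a_def b_def by auto
    ultimately show False using dvd_imp_le_int[of "a - b" "int n"] by simp
  qed
  have F0: "F 0 j = 0" for j by (rule cyc_prime[of n F a b, OF p n per rec za zb ab])
  show ?thesis
  proof (rule eq_vecI)
    fix i assume "i < dim_vec (0\<^sub>v n :: real vec)"
    hence il: "i < n" by simp
    have "F 0 (int i) = x $ i" unfolding F_def using il x by (simp add: cycle_laplacian_def)
    thus "x $ i = 0\<^sub>v n $ i" using F0 il by simp
  qed (use x in simp)
qed


theorem mainTheorem11:
  fixes n :: nat
  assumes "n \<ge> 3"
  shows "((\<forall>i1\<in>{1..n}. \<forall>i2\<in>{1..n}. i1 \<noteq> i2 \<longrightarrow>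
             reachable (cycle_laplacian n) (input_mat n i1 i2)) \<longleftrightarrow> prime n)
       \<and> ((\<forall>i1\<in>{1..n}. \<forall>i2\<in>{1..n}. i1 \<noteq> i2 \<longrightarrow>
             observable (cycle_laplacian n) (transpose_mat (input_mat n i1 i2))) \<longleftrightarrow> prime n)"
proof -
  have n: "n \<ge> 3" by fact
  let ?L = "cycle_laplacian n"
  have dL: "dim_row ?L = n" by (simp add: cycle_laplacian_def)
  let ?V = "\<lambda>i1 i2. (\<Union>k<n. {?L ^\<^sub>m k *\<^sub>v unit_vec n (i1 - 1), ?L ^\<^sub>m k *\<^sub>v unit_vec n (i2 - 1)})"
  have R_iff: "reachable ?L (input_mat n i1 i2) \<longleftrightarrow>
      vec_space.rank n (reach_mat ?L (input_mat n i1 i2)) = n" for i1 i2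
  proof -
    have "dim_row (reach_mat ?L (input_mat n i1 i2)) = n"
      using reach_facts(1)[of n i1 i2] by auto
    thus ?thesis unfolding reachable_def mat_rank_def dL by simp
  qed
  have Q_iff: "observable ?L (transpose_mat (input_mat n i1 i2)) \<longleftrightarrow>
      vec_space.rank (2 * n) (obs_mat ?L (transpose_mat (input_mat n i1 i2))) = n" for i1 i2
  proof -
    have "dim_row (obs_mat ?L (transpose_mat (input_mat n i1 i2))) = 2 * n"
      using obs_facts(1)[of n i1 i2] by auto
    thus ?thesis unfolding observable_def mat_rank_def dL by simp
  qed
  have part1: "(\<forall>i1\<in>{1..n}. \<forall>i2\<in>{1..n}. i1 \<noteq> i2 \<longrightarrow>
             reachable ?L (input_mat n i1 i2)) \<longleftrightarrow> prime n"
  proof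
    assume all: "\<forall>i1\<in>{1..n}. \<forall>i2\<in>{1..n}. i1 \<noteq> i2 \<longrightarrow> reachable ?L (input_mat n i1 i2)"
    show "prime n"
    proof (rule ccontr)
      assume np: "\<not> prime n"
      obtain d x where dx: "0 < d" "d < n" "x \<in> carrier_vec n" "x \<noteq> 0\<^sub>v n"
        "\<forall>k. (?L ^\<^sub>m k *\<^sub>v x) $ 0 = 0 \<and> (?L ^\<^sub>m k *\<^sub>v x) $ d = 0"
        using cyc_comp[OF n np] by blast
      have "reachable ?L (input_mat n 1 (d + 1))" using all dx by auto
      hence r: "vec_space.rank n (reach_mat ?L (input_mat n 1 (d + 1))) = n" using R_iff by blast
      have orth: "\<forall>c\<in>set (cols (reach_mat ?L (input_mat n 1 (d + 1)))). x \<bullet> c = 0"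
        unfolding reach_facts(2) using ker_char[of x n 0 d] dx n by simp
      show False using rank_H[OF reach_facts(1) dx(3,4) orth] r by simp
    qed
  next
    assume p: "prime n"
    show "\<forall>i1\<in>{1..n}. \<forall>i2\<in>{1..n}. i1 \<noteq> i2 \<longrightarrow> reachable ?L (input_mat n i1 i2)"
    proof (intro ballI impI)
      fix i1 i2 assume i: "i1 \<in> {1..n}" "i2 \<in> {1..n}" "i1 \<noteq> i2"
      have ab: "i1 - 1 < n" "i2 - 1 < n" using i by auto
      have "vec_space.rank n (reach_mat ?L (input_mat n i1 i2)) = n"
      proof (rule rank_G[OF reach_facts(1)])
        fix x :: "real vec" assume x: "x \<in> carrier_vec n"
          and o: "\<forall>c\<in>set (cols (reach_mat ?L (input_mat n i1 i2))). x \<bullet> c = 0"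
        have "\<forall>k<n. (?L ^\<^sub>m k *\<^sub>v x) $ (i1 - 1) = 0 \<and> (?L ^\<^sub>m k *\<^sub>v x) $ (i2 - 1) = 0"
          using o ker_char[OF x ab] unfolding reach_facts(2) by simp
        thus "x = 0\<^sub>v n" using ker_zero_prime[OF n p i x] by simp
      qed
      thus "reachable ?L (input_mat n i1 i2)" using R_iff by blast
    qed
  qed
  have part2: "(\<forall>i1\<in>{1..n}. \<forall>i2\<in>{1..n}. i1 \<noteq> i2 \<longrightarrow>
             observable ?L (transpose_mat (input_mat n i1 i2))) \<longleftrightarrow> prime n"
  proof
    assume all: "\<forall>i1\<in>{1..n}. \<forall>i2\<in>{1..n}. i1 \<noteq> i2 \<longrightarrow> observable ?L (transpose_mat (input_mat n i1 i2))"
    show "prime n"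
    proof (rule ccontr)
      assume np: "\<not> prime n"
      obtain d x where dx: "0 < d" "d < n" "x \<in> carrier_vec n" "x \<noteq> 0\<^sub>v n"
        "\<forall>k. (?L ^\<^sub>m k *\<^sub>v x) $ 0 = 0 \<and> (?L ^\<^sub>m k *\<^sub>v x) $ d = 0"
        using cyc_comp[OF n np] by blast
      let ?Q = "obs_mat ?L (transpose_mat (input_mat n 1 (d + 1)))"
      have "observable ?L (transpose_mat (input_mat n 1 (d + 1)))" using all dx by auto
      hence r: "vec_space.rank (2 * n) ?Q = n" using Q_iff by blast
      have orth: "\<forall>c\<in>set (rows ?Q). x \<bullet> c = 0"
        unfolding obs_facts(2) using ker_char[of x n 0 d] dx n by simp
      have orth': "\<forall>c\<in>set (rows ?Q). c \<bullet> x = 0"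
      proof
        fix c assume c: "c \<in> set (rows ?Q)"
        hence cc: "c \<in> carrier_vec n" by (rule set_rows_carrier[OF obs_facts(1)])
        have "x \<bullet> c = 0" using orth c by blast
        thus "c \<bullet> x = 0" using comm_scalar_prod[OF cc dx(3)] by simp
      qed
      have z: "?Q *\<^sub>v x = 0\<^sub>v (2 * n)" using rows_zero_iff[OF obs_facts(1) dx(3)] orth' by blast
      show False using rank_HO[OF obs_facts(1) dx(3,4) z] r by simp
    qed
  next
    assume p: "prime n"
    show "\<forall>i1\<in>{1..n}. \<forall>i2\<in>{1..n}. i1 \<noteq> i2 \<longrightarrow> observable ?L (transpose_mat (input_mat n i1 i2))"
    proof (intro ballI impI)
      fix i1 i2 assume i: "i1 \<in> {1..n}" "i2 \<in> {1..n}" "i1 \<noteq> i2"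
      have ab: "i1 - 1 < n" "i2 - 1 < n" using i by auto
      let ?Q = "obs_mat ?L (transpose_mat (input_mat n i1 i2))"
      have "vec_space.rank (2 * n) ?Q = n"
      proof (rule rank_GO[OF obs_facts(1)])
        fix x :: "real vec" assume x: "x \<in> carrier_vec n" and z: "?Q *\<^sub>v x = 0\<^sub>v (2 * n)"
        have o: "\<forall>c\<in>set (rows ?Q). c \<bullet> x = 0" using rows_zero_iff[OF obs_facts(1) x] z by blast
        have o': "\<forall>c\<in>set (rows ?Q). x \<bullet> c = 0"
        proof
          fix c assume c: "c \<in> set (rows ?Q)"
          hence cc: "c \<in> carrier_vec n" by (rule set_rows_carrier[OF obs_facts(1)])
          have "c \<bullet> x = 0" using o c by blast
          thus "x \<bullet> c = 0" using comm_scalar_prod[OF cc x] by simp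
        qed
        have "\<forall>k<n. (?L ^\<^sub>m k *\<^sub>v x) $ (i1 - 1) = 0 \<and> (?L ^\<^sub>m k *\<^sub>v x) $ (i2 - 1) = 0"
          using o' ker_char[OF x ab] unfolding obs_facts(2) by simp
        thus "x = 0\<^sub>v n" using ker_zero_prime[OF n p i x] by simp
      qed
      thus "observable ?L (transpose_mat (input_mat n i1 i2))" using Q_iff by blast
    qed
  qed
  show ?thesis using part1 part2 by blast
qed


end
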